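(* Suppose $\pi$ is an irreducible permutation on a finite alphabet $\mathcal{A}$ with $\pi=\pi^{-1}$. Then $\pi$ is Lagrangian, i.e. $H^\pi_V=\{x\in H^\pi:\omega(x,y)=0\text{ for all }y\in H^\pi_V\}$.
   Context: Let $\pi=(\pi_0,\pi_1)$ with bijections $\pi_\varepsilon:\mathcal{A}\to\{1,\dots,d\}$, irreducible (no $k<d$ with $\pi_0^{-1}(\{1..k\})=\pi_1^{-1}(\{1..k\})$); $\pi^{-1}=(\pi_1,\pi_0)$, and $\pi=\pi^{-1}$ means $\pi_1\circ\pi_0^{-1}$ is an involution. Define $\Omega=\Omega_\pi$ by $\Omega_{\alpha,\beta}=1$ if $\pi_0(\alpha)<\pi_0(\beta)$ and $\pi_1(\alpha)>\pi_1(\beta)$, $-1$ if $\pi_0(\alpha)>\pi_0(\beta)$ and $\pi_1(\alpha)<\pi_1(\beta)$, $0$ otherwise. Let $H^\pi=\Omega\mathbb{R}^{\mathcal{A}}$ with symplectic form $\omega(\Omega u,\Omega v)=u^t\Omega v$. Let $\pi_{\mathcal{A}}=\pi_0^{-1}\circ\pi_1$, $\mathbf{e}_{\mathcal{B}}=\sum_{\alpha\in\mathcal{B}}\mathbf{e}_\alpha$, $\mathbf{v}_{\mathcal{B}}=\Omega\mathbf{e}_{\mathcal{B}}$, and $H^\pi_V=\mathrm{span}\{\mathbf{v}_{\mathcal{B}}:\mathcal{B}\text{ an orbit of }\pi_{\mathcal{A}}\}$. *)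

theory Defs
  imports "HOL-Analysis.Analysis"
begin

text \<open>A permutation pi = (pi0, pi1) on a finite alphabet, given by the type 'a::finite;
  pi0, pi1 are bijections from the alphabet onto {1..d}, d = CARD('a).\<close>

definition is_perm_pair :: "('a::finite \<Rightarrow> nat) \<Rightarrow> ('a \<Rightarrow> nat) \<Rightarrow> bool" where
  "is_perm_pair p0 p1 \<longleftrightarrow>
     bij_betw p0 UNIV {1..CARD('a)} \<and> bij_betw p1 UNIV {1..CARD('a)}"

definition irreducible_perm :: "('a::finite \<Rightarrow> nat) \<Rightarrow> ('a \<Rightarrow> nat) \<Rightarrow> bool" where
  "irreducible_perm p0 p1 \<longleftrightarrow>
     \<not> (\<exists>k. 1 \<le> k \<and> k < CARD('a) \<and> p0 -` {1..k} = p1 -` {1..k})"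

text \<open>pi = pi^{-1}: the map pi1 o pi0^{-1} on {1..d} is an involution.\<close>
definition self_inverse_perm :: "('a::finite \<Rightarrow> nat) \<Rightarrow> ('a \<Rightarrow> nat) \<Rightarrow> bool" where
  "self_inverse_perm p0 p1 \<longleftrightarrow>
     (\<forall>i\<in>{1..CARD('a)}.
        (p1 \<circ> inv_into UNIV p0) ((p1 \<circ> inv_into UNIV p0) i) = i)"

definition Omega_mat :: "('a::finite \<Rightarrow> nat) \<Rightarrow> ('a \<Rightarrow> nat) \<Rightarrow> 'a \<Rightarrow> 'a \<Rightarrow> real" where
  "Omega_mat p0 p1 a b =
     (if p0 a < p0 b \<and> p1 a > p1 b then 1
      else if p0 a > p0 b \<and> p1 a < p1 b then -1 else 0)"

definition Omega_app :: "('a::finite \<Rightarrow> nat) \<Rightarrow> ('a \<Rightarrow> nat) \<Rightarrow> real^'a \<Rightarrow> real^'a" where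
  "Omega_app p0 p1 u = (\<chi> a. \<Sum>b\<in>UNIV. Omega_mat p0 p1 a b * u $ b)"

definition H_pi :: "('a::finite \<Rightarrow> nat) \<Rightarrow> ('a \<Rightarrow> nat) \<Rightarrow> (real^'a) set" where
  "H_pi p0 p1 = range (Omega_app p0 p1)"

definition omega_form :: "('a::finite \<Rightarrow> nat) \<Rightarrow> ('a \<Rightarrow> nat) \<Rightarrow> real^'a \<Rightarrow> real^'a \<Rightarrow> real" where
  "omega_form p0 p1 x y =
     (let u = (SOME u. Omega_app p0 p1 u = x); v = (SOME v. Omega_app p0 p1 v = y)
      in \<Sum>a\<in>UNIV. \<Sum>b\<in>UNIV. u $ a * Omega_mat p0 p1 a b * v $ b)"

definition pi_A :: "('a::finite \<Rightarrow> nat) \<Rightarrow> ('a \<Rightarrow> nat) \<Rightarrow> 'a \<Rightarrow> 'a" where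
  "pi_A p0 p1 = inv_into UNIV p0 \<circ> p1"

definition orbits_pi_A :: "('a::finite \<Rightarrow> nat) \<Rightarrow> ('a \<Rightarrow> nat) \<Rightarrow> 'a set set" where
  "orbits_pi_A p0 p1 = {{(pi_A p0 p1 ^^ n) a | n. True} | a. True}"

definition e_set :: "'a set \<Rightarrow> real^'a::finite" where
  "e_set B = (\<chi> a. if a \<in> B then 1 else 0)"

definition H_V :: "('a::finite \<Rightarrow> nat) \<Rightarrow> ('a \<Rightarrow> nat) \<Rightarrow> (real^'a) set" where
  "H_V p0 p1 = span ((\<lambda>B. Omega_app p0 p1 (e_set B)) ` orbits_pi_A p0 p1)"

definition lagrangian_perm :: "('a::finite \<Rightarrow> nat) \<Rightarrow> ('a \<Rightarrow> nat) \<Rightarrow> bool" where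
  "lagrangian_perm p0 p1 \<longleftrightarrow>
     H_V p0 p1 = {x \<in> H_pi p0 p1. \<forall>y\<in>H_V p0 p1. omega_form p0 p1 x y = 0}"

end

theory Submission
  imports Defs
begin

lemma Om_antisym: "Omega_mat p0 p1 a b = - Omega_mat p0 p1 b a"
  unfolding Omega_mat_def by auto

lemma Omega_linear: "linear (Omega_app p0 p1)"
  by (rule linearI) (simp_all add: Omega_app_def vec_eq_iff sum.distrib sum_distrib_left algebra_simps)

lemma Bform1: "(\<Sum>a\<in>UNIV. \<Sum>b\<in>UNIV. u$a * Omega_mat p0 p1 a b * v$b)
   = (\<Sum>a\<in>UNIV. u$a * (Omega_app p0 p1 v)$a)"
  unfolding Omega_app_def by (simp add: sum_distrib_left mult.assoc)

lemma Bform2: "(\<Sum>a\<in>UNIV. \<Sum>b\<in>UNIV. u$a * Omega_mat p0 p1 a b * v$b)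
   = - (\<Sum>b\<in>UNIV. (Omega_app p0 p1 u)$b * v$b)"
proof -
  have "(\<Sum>a\<in>UNIV. \<Sum>b\<in>UNIV. u$a * Omega_mat p0 p1 a b * v$b)
      = (\<Sum>b\<in>UNIV. \<Sum>a\<in>UNIV. u$a * Omega_mat p0 p1 a b * v$b)"
    by (rule sum.swap)
  also have "\<dots> = (\<Sum>b\<in>UNIV. - ((\<Sum>a\<in>UNIV. Omega_mat p0 p1 b a * u$a) * v$b))"
  proof (rule sum.cong[OF refl])
    fix b
    have "u$a * Omega_mat p0 p1 a b * v$b = - (Omega_mat p0 p1 b a * u$a * v$b)" for a
      by (subst Om_antisym) simp
    then have "(\<Sum>a\<in>UNIV. u$a * Omega_mat p0 p1 a b * v$b) = - (\<Sum>a\<in>UNIV. Omega_mat p0 p1 b a * u$a * v$b)"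
      by (simp add: sum_negf)
    then show "(\<Sum>a\<in>UNIV. u$a * Omega_mat p0 p1 a b * v$b) = - ((\<Sum>a\<in>UNIV. Omega_mat p0 p1 b a * u$a) * v$b)"
      by (simp add: sum_distrib_right)
  qed
  also have "\<dots> = - (\<Sum>b\<in>UNIV. (Omega_app p0 p1 u)$b * v$b)"
    unfolding Omega_app_def by (simp add: sum_negf)
  finally show ?thesis .
qed

lemma omega_eval:
  assumes "x = Omega_app p0 p1 u'" "y = Omega_app p0 p1 w"
  shows "omega_form p0 p1 x y = - (\<Sum>b\<in>UNIV. x$b * w$b)"
proof -
  define u where "u = (SOME u. Omega_app p0 p1 u = x)"
  define v where "v = (SOME v. Omega_app p0 p1 v = y)"
  have hu: "Omega_app p0 p1 u = x" unfolding u_def by (rule someI[of _ u']) (rule assms(1)[symmetric])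
  have hv: "Omega_app p0 p1 v = y" unfolding v_def by (rule someI[of _ w]) (rule assms(2)[symmetric])
  have "omega_form p0 p1 x y = (\<Sum>a\<in>UNIV. \<Sum>b\<in>UNIV. u$a * Omega_mat p0 p1 a b * v$b)"
    by (simp only: omega_form_def Let_def u_def v_def)
  also have "\<dots> = (\<Sum>a\<in>UNIV. u$a * y$a)" by (simp only: Bform1 hv)
  also have "\<dots> = (\<Sum>a\<in>UNIV. \<Sum>b\<in>UNIV. u$a * Omega_mat p0 p1 a b * w$b)"
    by (simp only: Bform1 assms(2))
  also have "\<dots> = - (\<Sum>b\<in>UNIV. x$b * w$b)" by (simp only: Bform2 hu)
  finally show ?thesis .
qed

lemma reindex_inv:
  assumes "\<And>a. t (t a) = a"
  shows "sum f (UNIV::'a::finite set) = sum (\<lambda>a. f (t a)) UNIV"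
  by (rule sum.reindex_bij_witness[where i=t and j=t]) (auto simp: assms)

lemma Omega_sym:
  assumes t: "\<And>a. t (t a) = a"
    and om: "\<And>a b. Omega_mat p0 p1 (t a) (t b) = - Omega_mat p0 p1 a b"
    and u: "\<And>a. u$(t a) = s * u$a"
  shows "(Omega_app p0 p1 u)$(t b) = - s * (Omega_app p0 p1 u)$b"
proof -
  have "(Omega_app p0 p1 u)$(t b) = (\<Sum>c\<in>UNIV. Omega_mat p0 p1 (t b) c * u$c)"
    by (simp add: Omega_app_def)
  also have "\<dots> = (\<Sum>c\<in>UNIV. Omega_mat p0 p1 (t b) (t c) * u$(t c))"
    by (rule reindex_inv[OF t])
  also have "\<dots> = (\<Sum>c\<in>UNIV. - s * (Omega_mat p0 p1 b c * u$c))"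
    by (intro sum.cong refl) (simp add: om u mult_ac)
  also have "\<dots> = - s * (Omega_app p0 p1 u)$b"
    by (simp add: Omega_app_def sum_distrib_left)
  finally show ?thesis .
qed

lemma orth:
  assumes t: "\<And>a. t (t a) = a"
    and om: "\<And>a b. Omega_mat p0 p1 (t a) (t b) = - Omega_mat p0 p1 a b"
    and u: "\<And>a. u$(t a) = u$a" and w: "\<And>a. w$(t a) = w$a"
  shows "(\<Sum>b\<in>UNIV. (Omega_app p0 p1 u)$b * w$b) = 0"
proof -
  have h: "(Omega_app p0 p1 u)$(t b) = - (Omega_app p0 p1 u)$b" for b
    using Omega_sym[OF t om, of u 1 b] u by simp
  have "(\<Sum>b\<in>UNIV. (Omega_app p0 p1 u)$b * w$b) = (\<Sum>b\<in>UNIV. (Omega_app p0 p1 u)$(t b) * w$(t b))"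
    by (rule reindex_inv[OF t])
  also have "\<dots> = - (\<Sum>b\<in>UNIV. (Omega_app p0 p1 u)$b * w$b)"
    by (simp add: h w sum_negf)
  finally show ?thesis by simp
qed

lemma iter_inv:
  assumes t: "\<And>a. t (t a) = a"
  shows "(t ^^ n) a = (if even n then a else t a)"
  by (induction n) (auto simp: t)

lemma orbit_eq:
  assumes t: "\<And>a. t (t a) = a"
  shows "{(t ^^ n) a | n. True} = {a, t a}"
proof
  show "{(t ^^ n) a | n. True} \<subseteq> {a, t a}" using iter_inv[OF t] by auto
  show "{a, t a} \<subseteq> {(t ^^ n) a | n. True}"
  proof
    fix x assume "x \<in> {a, t a}"
    then show "x \<in> {(t ^^ n) a | n. True}"
    proof
      assume "x = a" then show ?thesis by (auto intro: exI[of _ 0])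
    next
      assume "x \<in> {t a}" then show ?thesis by (auto intro!: exI[of _ "Suc 0"])
    qed
  qed
qed

lemma e_set_inv:
  assumes t: "\<And>a. t (t a) = a"
  shows "e_set {a, t a} $ (t b) = e_set {a, t a} $ b"
proof -
  have "t b \<in> {a, t a} \<longleftrightarrow> b \<in> {a, t a}" using t by (metis insertCI insertE singletonD)
  then show ?thesis unfolding e_set_def by simp
qed
lemma e_set_c:
  assumes t: "\<And>a. t (t a) = a"
  shows "e_set {a, t a} $ b * (if t a = a then 2 else 1)
     = (if a = b then 1 else 0) + (if a = t b then 1 else (0::real))"
proof -
  have "a = t b \<longleftrightarrow> b = t a" using t by metis
  then show ?thesis unfolding e_set_def by auto
qed

lemma inv_in_span:
  assumes t: "\<And>a. t (t a) = a"
    and v: "\<And>a. v$(t a) = v$a"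
  shows "v \<in> span ((\<lambda>a. e_set {a, t a}) ` UNIV)"
proof -
  let ?c = "\<lambda>a. if t a = a then 2 else (1::real)"
  have eq: "v = (\<Sum>a\<in>UNIV. (v$a / 2 * ?c a) *\<^sub>R e_set {a, t a})"
  proof (subst vec_eq_iff, intro allI)
    fix b
    have "(\<Sum>a\<in>UNIV. (v$a / 2 * ?c a) *\<^sub>R e_set {a, t a}) $ b
        = (\<Sum>a\<in>UNIV. v$a / 2 * (e_set {a, t a} $ b * ?c a))"
      by (simp add: sum_component algebra_simps)
    also have "\<dots> = (\<Sum>a\<in>UNIV. v$a / 2 * ((if a = b then 1 else 0) + (if a = t b then 1 else 0)))"
      by (simp only: e_set_c[OF t])
    also have "\<dots> = (\<Sum>a\<in>UNIV. (if a = b then v$a/2 else 0)) + (\<Sum>a\<in>UNIV. (if a = t b then v$a/2 else 0))"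
      by (subst sum.distrib[symmetric], rule sum.cong) auto
    also have "\<dots> = v$b / 2 + v$(t b) / 2"
      by simp
    also have "\<dots> = v$b" using v[of b] by simp
    finally show "v $ b = (\<Sum>a\<in>UNIV. (v$a / 2 * ?c a) *\<^sub>R e_set {a, t a}) $ b" by simp
  qed
  show ?thesis
    by (subst eq, rule span_sum, rule span_mul, rule span_base) auto
qed

lemma inv_subspace: "subspace {v::real^'a::finite. \<forall>a. v$(t a) = v$a}"
  unfolding subspace_def by auto

theorem mainTheorem8:
  fixes p0 p1 :: "'a::finite \<Rightarrow> nat"
  assumes "is_perm_pair p0 p1"
    and "irreducible_perm p0 p1"
    and "self_inverse_perm p0 p1"
  shows "lagrangian_perm p0 p1"
proof -
  define t where "t = pi_A p0 p1"
  have b0: "bij_betw p0 UNIV {1..CARD('a)}" and b1: "bij_betw p1 UNIV {1..CARD('a)}"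
    using assms(1) unfolding is_perm_pair_def by auto
  have r1: "p1 a \<in> range p0" for a using b0 b1 unfolding bij_betw_def by auto
  have p0t: "p0 (t a) = p1 a" for a
    unfolding t_def pi_A_def using r1 by (simp add: f_inv_into_f)
  have i1: "inj p1" using b1 bij_betw_def by auto
  have tt: "t (t a) = a" for a
  proof -
    have "p1 a \<in> {1..CARD('a)}" using b1 bij_betwE by blast
    then have "(p1 \<circ> inv_into UNIV p0) ((p1 \<circ> inv_into UNIV p0) (p1 a)) = p1 a"
      using assms(3) unfolding self_inverse_perm_def by blast
    then have "p1 (t (t a)) = p1 a" unfolding t_def pi_A_def by simp
    then show ?thesis using i1 by (simp add: inj_eq)
  qed
  have p1t: "p1 (t a) = p0 a" for a using p0t[of "t a"] tt[of a] by simp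
  have om: "Omega_mat p0 p1 (t a) (t b) = - Omega_mat p0 p1 a b" for a b
    unfolding Omega_mat_def p0t p1t by auto
  let ?O = "Omega_app p0 p1"
  define V where "V = {v::real^'a. \<forall>a. v$(t a) = v$a}"
  define E where "E = (\<lambda>a. e_set {a, t a}) ` (UNIV::'a set)"
  have orbs: "orbits_pi_A p0 p1 = (\<lambda>a. {a, t a}) ` UNIV"
    unfolding orbits_pi_A_def t_def[symmetric] using orbit_eq[OF tt] by auto
  have HV: "H_V p0 p1 = ?O ` span E"
    unfolding H_V_def orbs E_def image_comp
    by (subst span_linear_image[OF Omega_linear, symmetric]) (simp add: image_comp o_def)
  have EV: "E \<subseteq> V" unfolding E_def V_def using e_set_inv[OF tt] by auto
  have spanV: "span E \<subseteq> V"
    using span_minimal[OF EV] inv_subspace[of t] unfolding V_def by auto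
  have Vspan: "V \<subseteq> span E" unfolding V_def E_def using inv_in_span[OF tt] by auto
  show ?thesis
    unfolding lagrangian_perm_def
  proof (rule set_eqI, rule iffI)
    fix x assume "x \<in> H_V p0 p1"
    then obtain u where x: "x = ?O u" and u: "u \<in> V" using HV spanV by auto
    have "x \<in> H_pi p0 p1" unfolding H_pi_def x by simp
    moreover have "\<forall>y\<in>H_V p0 p1. omega_form p0 p1 x y = 0"
    proof
      fix y assume "y \<in> H_V p0 p1"
      then obtain w where y: "y = ?O w" and w: "w \<in> V" using HV spanV by auto
      show "omega_form p0 p1 x y = 0"
        using omega_eval[OF x y] orth[OF tt om, of u w] u w unfolding V_def by (simp add: x)
    qed
    ultimately show "x \<in> {x \<in> H_pi p0 p1. \<forall>y\<in>H_V p0 p1. omega_form p0 p1 x y = 0}" by simp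
  next
    fix x assume "x \<in> {x \<in> H_pi p0 p1. \<forall>y\<in>H_V p0 p1. omega_form p0 p1 x y = 0}"
    then obtain u where x: "x = ?O u" and hy: "\<forall>y\<in>H_V p0 p1. omega_form p0 p1 x y = 0"
      unfolding H_pi_def by auto
    have xanti: "x$(t a) = - x$a" for a
    proof -
      have "e_set {a, t a} \<in> span E" unfolding E_def by (rule span_base) auto
      then have "?O (e_set {a, t a}) \<in> H_V p0 p1" unfolding HV by auto
      then have "omega_form p0 p1 x (?O (e_set {a, t a})) = 0" using hy by auto
      then have s0: "(\<Sum>b\<in>UNIV. x$b * e_set {a, t a} $ b) = 0"
        using omega_eval[OF x refl] by simp
      have "(\<Sum>b\<in>UNIV. x$b * e_set {a, t a} $ b) = sum (\<lambda>b. x$b) {a, t a}"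
      proof -
        have st: "{b. b = a \<or> b = t a} = {a, t a}" by auto
        show ?thesis unfolding e_set_def by (simp add: sum.If_cases if_distrib st cong: if_cong)
      qed
      then have "sum (\<lambda>b. x$b) {a, t a} = 0" using s0 by simp
      then show ?thesis by (cases "t a = a") auto
    qed
    define uV where "uV = (\<chi> a. (u$a + u$(t a)) / 2)"
    define uE where "uE = (\<chi> a. (u$a - u$(t a)) / 2)"
    have usum: "u = uV + uE" unfolding uV_def uE_def by (simp add: vec_eq_iff field_simps)
    have uVi: "uV$(t a) = 1 * uV$a" for a unfolding uV_def by (simp add: tt)
    have uEi: "uE$(t a) = -1 * uE$a" for a unfolding uE_def by (simp add: tt field_simps)
    have xs: "x = ?O uV + ?O uE" unfolding x usum using Omega_linear linear_add by blast
    have z: "?O uE = 0"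
    proof (subst vec_eq_iff, intro allI)
      fix a
      have h1: "(?O uE)$(t a) = (?O uE)$a" using Omega_sym[OF tt om, of uE "-1" a] uEi by simp
      have h2: "(?O uV)$(t a) = - (?O uV)$a" using Omega_sym[OF tt om, of uV 1 a] uVi by simp
      have "(?O uE)$(t a) = - (?O uE)$a"
        using xanti[of a] h2 arg_cong[OF xs, of "\<lambda>v. v$a"] arg_cong[OF xs, of "\<lambda>v. v$(t a)"] by simp
      then show "(?O uE)$a = 0$a" using h1 by simp
    qed
    have "uV \<in> V" unfolding V_def using uVi by simp
    then have "x \<in> H_V p0 p1" unfolding HV using Vspan xs z by auto
    then show "x \<in> H_V p0 p1" .
  qed
qed

end
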